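(* Let $n\ge 2$ and let $\mathbb{H}^n=\mathbb{R}^+\times\mathbb{R}^{n-1}=\{(t,x)\}$ be the hyperbolic upper-half space with metric $ds^2=\frac{1}{t^2}(dt^2+dx_1^2+\dots+dx_{n-1}^2)$. Let $h:\mathbb{R}^{n-1}\to\mathbb{C}$ be a non-constant function harmonic with respect to the Euclidean metric on $\mathbb{R}^{n-1}$, let $r\ge 1$ be an integer, and let $p_r:\mathbb{R}^+\to\mathbb{C}$ be given by $p_r(t)=(a_r+b_r t^{n-1})\cdot\log(t)^{r-1}$, where $(a_r,b_r)\in\mathbb{C}^2$ is non-zero. Then the function $f_r:\mathbb{H}^n\to\mathbb{C}$, $f_r(t,x)=p_r(t)\cdot h(x)$, is proper $r$-harmonic on $\mathbb{H}^n$.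
   Context: For a Riemannian manifold $(M,g)$ the Laplace–Beltrami operator (tension field) acts on complex-valued functions by $\tau(f)=\sum_{i,j}\frac{1}{\sqrt{|g|}}\frac{\partial}{\partial x_j}\bigl(g^{ij}\sqrt{|g|}\frac{\partial f}{\partial x_i}\bigr)$; on $\mathbb{H}^n$ this is $\tau(f)=t^2\sum_{k=1}^{n-1}\frac{\partial^2 f}{\partial x_k^2}+t^2\frac{\partial^2 f}{\partial t^2}-(n-2)t\frac{\partial f}{\partial t}$. Iterates: $\tau^0(f)=f$, $\tau^r(f)=\tau(\tau^{r-1}(f))$. A function $f$ is $r$-harmonic if $\tau^r(f)=0$, and proper $r$-harmonic if moreover $\tau^{r-1}(f)$ does not vanish identically. *)

theory Defs
  imports "HOL-Analysis.Analysis"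
begin

text \<open>Points of H^n are pairs (t,x) with t > 0 and x in R^(n-1); the coordinate space
  R^(n-1) is modelled as real^'m, so n = CARD('m) + 1 (hence n >= 2 automatically).
  Functions on H^n are represented as curried functions real => real^'m => complex;
  only their values at t > 0 matter.\<close>

definition dt1 :: "(real \<Rightarrow> real^'m \<Rightarrow> complex) \<Rightarrow> real \<Rightarrow> real^'m \<Rightarrow> complex" where
  "dt1 f t x = vector_derivative (\<lambda>s. f s x) (at t)"

definition dt2 :: "(real \<Rightarrow> real^'m \<Rightarrow> complex) \<Rightarrow> real \<Rightarrow> real^'m \<Rightarrow> complex" where
  "dt2 f t x = vector_derivative (\<lambda>s. vector_derivative (\<lambda>u. f u x) (at s)) (at t)"

definition dx2 :: "'m::finite \<Rightarrow> (real^'m \<Rightarrow> complex) \<Rightarrow> real^'m \<Rightarrow> complex" where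
  "dx2 k g x = vector_derivative
      (\<lambda>u. vector_derivative (\<lambda>v. g (x + v *\<^sub>R axis k 1)) (at u)) (at 0)"

definition eucl_laplacian :: "(real^'m::finite \<Rightarrow> complex) \<Rightarrow> real^'m \<Rightarrow> complex" where
  "eucl_laplacian g x = (\<Sum>k\<in>UNIV. dx2 k g x)"

definition C2 :: "(real^'m::finite \<Rightarrow> complex) \<Rightarrow> bool" where
  "C2 g \<longleftrightarrow> (\<exists>D1 D2. (\<forall>x. (g has_derivative D1 x) (at x)) \<and>
      (\<forall>x v. ((\<lambda>y. D1 y v) has_derivative D2 x v) (at x)) \<and>
      (\<forall>v w. continuous_on UNIV (\<lambda>x. D2 x v w)))"

definition eucl_harmonic :: "(real^'m::finite \<Rightarrow> complex) \<Rightarrow> bool" where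
  "eucl_harmonic g \<longleftrightarrow> C2 g \<and> (\<forall>x. eucl_laplacian g x = 0)"

definition tension :: "(real \<Rightarrow> real^'m::finite \<Rightarrow> complex) \<Rightarrow> real \<Rightarrow> real^'m \<Rightarrow> complex" where
  "tension f t x =
     complex_of_real (t^2) * (\<Sum>k\<in>UNIV. dx2 k (f t) x)
     + complex_of_real (t^2) * dt2 f t x
     - complex_of_real ((real CARD('m) + 1 - 2) * t) * dt1 f t x"

definition r_harmonic :: "nat \<Rightarrow> (real \<Rightarrow> real^'m::finite \<Rightarrow> complex) \<Rightarrow> bool" where
  "r_harmonic r f \<longleftrightarrow> (\<forall>t>0. \<forall>x. (tension ^^ r) f t x = 0)"

definition proper_r_harmonic :: "nat \<Rightarrow> (real \<Rightarrow> real^'m::finite \<Rightarrow> complex) \<Rightarrow> bool" where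
  "proper_r_harmonic r f \<longleftrightarrow> r_harmonic r f \<and>
     (\<exists>t>0. \<exists>x. (tension ^^ (r - 1)) f t x \<noteq> 0)"

end

theory Submission
  imports Defs "HOL-Computational_Algebra.Polynomial"
begin

definition opc :: "complex \<Rightarrow> complex poly \<Rightarrow> complex poly" where
  "opc c A = pderiv (pderiv A) + smult c (pderiv A)"

lemma opc_iter: "degree A \<le> d \<Longrightarrow> (opc c ^^ d) A = [: coeff A d * c^d * fact d :]"
proof (induction d arbitrary: A)
  case 0 then show ?case using degree_0_id[of A] by simp
next
  case (Suc d)
  have deg: "degree (opc c A) \<le> d"
  proof -
    have a: "degree (pderiv (pderiv A)) \<le> d" using Suc.prems by (simp add: degree_pderiv)
    have b: "degree (smult c (pderiv A)) \<le> d"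
      using Suc.prems degree_smult_le[of c "pderiv A"] by (simp add: degree_pderiv)
    show ?thesis unfolding opc_def using degree_add_le[OF a b] .
  qed
  have "coeff A (Suc (Suc d)) = 0" using Suc.prems by (intro coeff_eq_0) auto
  then have co: "coeff (opc c A) d = c * of_nat (Suc d) * coeff A (Suc d)"
    unfolding opc_def by (simp add: coeff_pderiv)
  have "(opc c ^^ Suc d) A = (opc c ^^ d) (opc c A)" by (simp add: funpow_Suc_right del: funpow.simps)
  also have "\<dots> = [: coeff (opc c A) d * c^d * fact d :]" using Suc.IH[OF deg] .
  also have "\<dots> = [: coeff A (Suc d) * c^(Suc d) * fact (Suc d) :]"
    by (simp add: co fact_Suc algebra_simps)
  finally show ?case .
qed

lemma opc_const [simp]: "opc c [:z:] = 0"
  by (simp add: opc_def pderiv_pCons)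

definition Fh :: "nat \<Rightarrow> complex poly \<Rightarrow> complex poly \<Rightarrow> real \<Rightarrow> complex" where
  "Fh m A B s = poly A (of_real (ln s)) + of_real (s^m) * poly B (of_real (ln s))"

lemma Fh_deriv:
  assumes "s > 0"
  shows "(Fh m A B has_vector_derivative
          Fh m (pderiv A) (smult (of_nat m) B + pderiv B) s / of_real s) (at s)"
proof -
  have 1: "((\<lambda>s. complex_of_real (ln s)) has_vector_derivative of_real (inverse s)) (at s)"
    by (intro has_vector_derivative_of_real DERIV_ln assms)
  have 2: "((\<lambda>s. poly P (of_real (ln s))) has_vector_derivative
        (of_real (inverse s) * poly (pderiv P) (of_real (ln s)))) (at s)" for P :: "complex poly"
    using field_vector_diff_chain_at[OF 1 poly_DERIV, of P] by (simp add: o_def)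
  have 4: "((\<lambda>s. complex_of_real (s^m)) has_vector_derivative of_real (of_nat m * s^(m - Suc 0))) (at s)"
    by (intro has_vector_derivative_of_real DERIV_pow)
  have "(Fh m A B has_vector_derivative
      (of_real (inverse s) * poly (pderiv A) (of_real (ln s)) +
       (of_real (s^m) * (of_real (inverse s) * poly (pderiv B) (of_real (ln s)))
        + of_real (of_nat m * s^(m - Suc 0)) * poly B (of_real (ln s))))) (at s)"
    unfolding Fh_def[abs_def]
    by (intro has_vector_derivative_add has_vector_derivative_mult 2 4)
  moreover have "(of_real (inverse s) * poly (pderiv A) (of_real (ln s)) +
       (of_real (s^m) * (of_real (inverse s) * poly (pderiv B) (of_real (ln s)))
        + of_real (of_nat m * s^(m - Suc 0)) * poly B (of_real (ln s))))
     = Fh m (pderiv A) (smult (of_nat m) B + pderiv B) s / of_real s"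
    using assms by (cases m) (auto simp: Fh_def field_simps)
  ultimately show ?thesis by simp
qed

lemma dx2_scaled:
  fixes h :: "real^'m::finite \<Rightarrow> complex"
  assumes d1: "\<forall>x. (h has_derivative D1 x) (at x)"
    and d2: "\<forall>x v. ((\<lambda>y. D1 y v) has_derivative D2 x v) (at x)"
  shows "dx2 k (\<lambda>y. c * h y) x = c * D2 x (axis k 1) (axis k 1)"
proof -
  let ?e = "axis k (1::real) :: real^'m"
  have lin: "((\<lambda>v. x + v *\<^sub>R ?e) has_derivative (\<lambda>w. w *\<^sub>R ?e)) (at u)" for u
    by (auto intro!: derivative_eq_intros)
  have inner: "((\<lambda>v. c * h (x + v *\<^sub>R ?e)) has_vector_derivative c * D1 (x + u *\<^sub>R ?e) ?e) (at u)" for u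
  proof -
    have "((\<lambda>v. h (x + v *\<^sub>R ?e)) has_derivative (\<lambda>w. D1 (x + u *\<^sub>R ?e) (w *\<^sub>R ?e))) (at u)"
      using has_derivative_compose[OF lin d1[rule_format]] by simp
    moreover have "linear (D1 (x + u *\<^sub>R ?e))"
      using d1 has_derivative_linear by blast
    ultimately have "((\<lambda>v. h (x + v *\<^sub>R ?e)) has_vector_derivative D1 (x + u *\<^sub>R ?e) ?e) (at u)"
      unfolding has_vector_derivative_def by (simp add: linear_cmul)
    then show ?thesis by (rule has_vector_derivative_mult_right)
  qed
  have outer: "((\<lambda>u. c * D1 (x + u *\<^sub>R ?e) ?e) has_vector_derivative c * D2 x ?e ?e) (at 0)"
  proof -
    have "((\<lambda>u. D1 (x + u *\<^sub>R ?e) ?e) has_derivative (\<lambda>w. D2 x ?e (w *\<^sub>R ?e))) (at 0)"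
      using has_derivative_compose[OF lin[of 0] d2[rule_format, of ?e "x + 0 *\<^sub>R ?e"]] by simp
    moreover have "linear (D2 x ?e)"
      using d2 has_derivative_linear by blast
    ultimately have "((\<lambda>u. D1 (x + u *\<^sub>R ?e) ?e) has_vector_derivative D2 x ?e ?e) (at 0)"
      unfolding has_vector_derivative_def by (simp add: linear_cmul)
    then show ?thesis by (rule has_vector_derivative_mult_right)
  qed
  show ?thesis
    unfolding dx2_def using vector_derivative_at[OF inner] vector_derivative_at[OF outer]
    by simp
qed

lemma Fh_lin:
  "Fh m (pderiv (pderiv A)) (smult (of_nat m) (smult (of_nat m) B + pderiv B) + pderiv (smult (of_nat m) B + pderiv B)) t
   - Fh m (pderiv A) (smult (of_nat m) B + pderiv B) t
   - complex_of_real (real m - 1) * Fh m (pderiv A) (smult (of_nat m) B + pderiv B) t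
   = Fh m (opc (- of_nat m) A) (opc (of_nat m) B) t"
  by (simp add: Fh_def opc_def pderiv_add pderiv_smult algebra_simps)

lemma tension_step:
  fixes G :: "real \<Rightarrow> real^'m::finite \<Rightarrow> complex" and h :: "real^'m \<Rightarrow> complex"
  assumes d1: "\<forall>x. (h has_derivative D1 x) (at x)"
    and d2: "\<forall>x v. ((\<lambda>y. D1 y v) has_derivative D2 x v) (at x)"
    and lap: "\<forall>x. (\<Sum>k\<in>UNIV. D2 x (axis k 1) (axis k 1)) = 0"
    and G: "\<forall>s>0. \<forall>y. G s y = Fh CARD('m) A B s * h y" and t: "t > 0"
  shows "tension G t x = Fh CARD('m) (opc (- of_nat CARD('m)) A) (opc (of_nat CARD('m)) B) t * h x"
proof -
  define m where "m = CARD('m)"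
  define A1 where "A1 = pderiv A"
  define B1 where "B1 = smult (of_nat m) B + pderiv B"
  define A2 where "A2 = pderiv A1"
  define B2 where "B2 = smult (of_nat m) B1 + pderiv B1"
  have Gt: "G t = (\<lambda>y. Fh m A B t * h y)" using G t by (auto simp: m_def)
  have X: "(\<Sum>k\<in>UNIV. dx2 k (G t) x) = 0"
    unfolding Gt dx2_scaled[OF d1 d2] using lap by (simp add: sum_distrib_left[symmetric])
  have Dv1: "((\<lambda>s. G s x) has_vector_derivative Fh m A1 B1 s / of_real s * h x) (at s)" if "s > 0" for s
  proof (rule has_vector_derivative_transform_within_open[of _ _ _ "{0<..}"])
    show "((\<lambda>s. Fh m A B s * h x) has_vector_derivative Fh m A1 B1 s / of_real s * h x) (at s)"
      unfolding A1_def B1_def by (intro has_vector_derivative_mult_left Fh_deriv that)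
  qed (use that G in \<open>auto simp: m_def\<close>)
  have dt1: "dt1 G s x = Fh m A1 B1 s / of_real s * h x" if "s > 0" for s
    unfolding dt1_def using vector_derivative_at[OF Dv1[OF that]] .
  have Dv2: "((\<lambda>s. vector_derivative (\<lambda>u. G u x) (at s)) has_vector_derivative
      (Fh m A1 B1 t * of_real (- (inverse t ^ Suc (Suc 0))) + Fh m A2 B2 t / of_real t * of_real (inverse t)) * h x) (at t)"
  proof (rule has_vector_derivative_transform_within_open[of _ _ _ "{0<..}"])
    have i: "((\<lambda>s. complex_of_real (inverse s)) has_vector_derivative of_real (- (inverse t ^ Suc (Suc 0)))) (at t)"
      using t by (intro has_vector_derivative_of_real DERIV_inverse) auto
    show "((\<lambda>s. Fh m A1 B1 s * of_real (inverse s) * h x) has_vector_derivative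
      (Fh m A1 B1 t * of_real (- (inverse t ^ Suc (Suc 0))) + Fh m A2 B2 t / of_real t * of_real (inverse t)) * h x) (at t)"
      unfolding A2_def B2_def by (intro has_vector_derivative_mult_left has_vector_derivative_mult Fh_deriv t i)
    show "Fh m A1 B1 s * complex_of_real (inverse s) * h x = vector_derivative (\<lambda>u. G u x) (at s)"
      if "s \<in> {0<..}" for s
      using dt1[of s] that unfolding dt1_def by (simp add: divide_inverse)
  qed (use t in auto)
  have dt2: "dt2 G t x = (Fh m A1 B1 t * of_real (- (inverse t ^ Suc (Suc 0))) + Fh m A2 B2 t / of_real t * of_real (inverse t)) * h x"
    unfolding dt2_def using vector_derivative_at[OF Dv2] .
  have "tension G t x = complex_of_real (t^2) * dt2 G t x - complex_of_real ((real m + 1 - 2) * t) * dt1 G t x"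
    unfolding tension_def X m_def by simp
  also have "\<dots> = (Fh m A2 B2 t - Fh m A1 B1 t - complex_of_real (real m - 1) * Fh m A1 B1 t) * h x"
    unfolding dt2 dt1[OF t] using t by (simp add: field_simps power2_eq_square)
  also have "\<dots> = Fh m (opc (- of_nat m) A) (opc (of_nat m) B) t * h x"
    unfolding A2_def B2_def A1_def B1_def Fh_lin ..
  finally show ?thesis unfolding m_def .
qed

theorem theorem3p3:
  fixes h :: "real^'m::finite \<Rightarrow> complex"
    and r :: nat and a b :: complex
  assumes "eucl_harmonic h"
    and "\<not> (\<exists>c. \<forall>x. h x = c)"
    and "r \<ge> 1"
    and "(a, b) \<noteq> (0, 0)"
  shows "proper_r_harmonic r
           (\<lambda>t x. ((a + b * complex_of_real (t ^ CARD('m))) * complex_of_real (ln t ^ (r - 1))) * h x)"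
proof -
  define m where "m = CARD('m)"
  define f where "f = (\<lambda>t x. ((a + b * complex_of_real (t ^ CARD('m))) * complex_of_real (ln t ^ (r - 1))) * h x)"
  define A0 where "A0 = monom a (r - 1)"
  define B0 where "B0 = monom b (r - 1)"
  from assms(1) obtain D1 D2 where d1: "\<forall>x. (h has_derivative D1 x) (at x)"
    and d2: "\<forall>x v. ((\<lambda>y. D1 y v) has_derivative D2 x v) (at x)"
    and lh: "\<forall>x. eucl_laplacian h x = 0"
    unfolding eucl_harmonic_def C2_def by blast
  have lap: "\<forall>x. (\<Sum>k\<in>UNIV. D2 x (axis k 1) (axis k 1)) = 0"
  proof
    fix x
    have dk: "dx2 k h x = D2 x (axis k 1) (axis k 1)" for k
      using dx2_scaled[OF d1 d2, of k 1 x] by simp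
    show "(\<Sum>k\<in>UNIV. D2 x (axis k 1) (axis k 1)) = 0"
      using lh[rule_format, of x] unfolding eucl_laplacian_def dk .
  qed
  have iter: "\<forall>s>0. \<forall>y. (tension ^^ k) f s y =
      Fh m ((opc (- of_nat m) ^^ k) A0) ((opc (of_nat m) ^^ k) B0) s * h y" for k
  proof (induction k)
    case 0
    show ?case
      by (auto simp: f_def Fh_def A0_def B0_def m_def poly_monom algebra_simps)
  next
    case (Suc k)
    show ?case
      using tension_step[OF d1 d2 lap, of "(tension ^^ k) f"] Suc.IH unfolding m_def
      by simp
  qed
  have ca: "(opc (- of_nat m) ^^ (r - 1)) A0 = [: a * (- of_nat m)^(r-1) * fact (r-1) :]"
    unfolding A0_def by (subst opc_iter) (auto simp: degree_monom_le)
  have cb: "(opc (of_nat m) ^^ (r - 1)) B0 = [: b * (of_nat m)^(r-1) * fact (r-1) :]"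
    unfolding B0_def by (subst opc_iter) (auto simp: degree_monom_le)
  have rr: "r = Suc (r - 1)" using assms(3) by simp
  have harm: "r_harmonic r f"
    unfolding r_harmonic_def
  proof (intro allI impI)
    fix t :: real and x assume "t > 0"
    have "(opc (- of_nat m) ^^ r) A0 = 0"
      by (subst rr) (simp only: funpow.simps o_def ca opc_const)
    moreover have "(opc (of_nat m) ^^ r) B0 = 0"
      by (subst rr) (simp only: funpow.simps o_def cb opc_const)
    ultimately show "(tension ^^ r) f t x = 0"
      using iter[of r] \<open>t > 0\<close> by (simp add: Fh_def)
  qed
  obtain x0 where x0: "h x0 \<noteq> 0" using assms(2) by auto
  define ca' where "ca' = a * (- of_nat m)^(r-1) * fact (r-1)"
  define cb' where "cb' = b * (of_nat m)^(r-1) * fact (r-1)"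
  have mpos: "m \<ge> 1" unfolding m_def by (simp add: Suc_leI)
  have nz: "ca' \<noteq> 0 \<or> cb' \<noteq> 0"
    using assms(4) mpos unfolding ca'_def cb'_def by auto
  have val: "(tension ^^ (r - 1)) f t x = (ca' + of_real (t ^ m) * cb') * h x" if "t > 0" for t x
    using iter[of "r - 1"] that unfolding ca cb ca'_def cb'_def by (simp add: Fh_def)
  have "\<exists>t>0. ca' + of_real (t ^ m) * cb' \<noteq> 0"
  proof (cases "ca' + cb' = 0")
    case False
    then show ?thesis by (intro exI[of _ 1]) auto
  next
    case True
    then have "cb' \<noteq> 0" using nz by auto
    moreover have "(2::real) ^ m \<noteq> 1" 
    proof -
      have "1 < (2::real) ^ m" by (rule one_less_power) (use mpos in auto)
      then show ?thesis by linarith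
    qed
    moreover have "ca' + of_real (2 ^ m) * cb' = cb' * (of_real (2 ^ m) - 1)"
      using True by (simp add: algebra_simps eq_neg_iff_add_eq_0[symmetric])
    moreover have "complex_of_real (2 ^ m) - 1 \<noteq> 0"
      using \<open>(2::real) ^ m \<noteq> 1\<close> by (metis of_real_1 of_real_eq_iff right_minus_eq)
    ultimately have "ca' + of_real (2 ^ m) * cb' \<noteq> 0" by simp
    then show ?thesis by (intro exI[of _ 2]) auto
  qed
  then obtain t where "t > 0" "ca' + of_real (t ^ m) * cb' \<noteq> 0" by blast
  then have "(tension ^^ (r - 1)) f t x0 \<noteq> 0" using val x0 by simp
  with harm \<open>t > 0\<close> show ?thesis
    unfolding proper_r_harmonic_def f_def[symmetric] by blast
qed

end
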